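(* Let $p\ge 1$ and $q\ge 3$ be integers. If $H$ is a graph that is $Q$-cospectral with the jellyfish graph $JFG(p,q)$, then $\det(Q(H))\in\{0,4\}$.
   Context: All graphs are finite and simple. The jellyfish graph $JFG(p,q)$ is obtained from a cycle $C_q$ and $q$ copies of the star $K_{1,p}$ by identifying each vertex of $C_q$ with the center (vertex of maximum degree) of a distinct copy of $K_{1,p}$. The signless Laplacian matrix is $Q(G)=A(G)+D(G)$, with $A(G)$ the adjacency matrix and $D(G)$ the diagonal degree matrix. Two graphs are $Q$-cospectral if their signless Laplacian matrices have the same spectrum. *)

theory Defs
  imports "Jordan_Normal_Form.Determinant" "Jordan_Normal_Form.Char_Poly" "HOL-Computational_Algebra.Fundamental_Theorem_Algebra"
begin

definition simple_graph :: "nat \<Rightarrow> (nat \<Rightarrow> nat \<Rightarrow> bool) \<Rightarrow> bool" where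
  "simple_graph n E \<longleftrightarrow> (\<forall>i<n. \<forall>j<n. E i j = E j i) \<and> (\<forall>i<n. \<not> E i i)"

definition degree :: "nat \<Rightarrow> (nat \<Rightarrow> nat \<Rightarrow> bool) \<Rightarrow> nat \<Rightarrow> nat" where
  "degree n E i = card {j. j < n \<and> E i j}"

definition adjacency_matrix :: "nat \<Rightarrow> (nat \<Rightarrow> nat \<Rightarrow> bool) \<Rightarrow> real mat" where
  "adjacency_matrix n E = mat n n (\<lambda>(i, j). if E i j then 1 else 0)"

definition degree_matrix :: "nat \<Rightarrow> (nat \<Rightarrow> nat \<Rightarrow> bool) \<Rightarrow> real mat" where
  "degree_matrix n E = mat n n (\<lambda>(i, j). if i = j then real (degree n E i) else 0)"

definition signless_laplacian :: "nat \<Rightarrow> (nat \<Rightarrow> nat \<Rightarrow> bool) \<Rightarrow> real mat" where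
  "signless_laplacian n E = adjacency_matrix n E + degree_matrix n E"

definition mat_spectrum :: "real mat \<Rightarrow> complex multiset" where
  "mat_spectrum M = proots (char_poly (map_mat complex_of_real M))"

definition Q_cospectral ::
  "nat \<Rightarrow> (nat \<Rightarrow> nat \<Rightarrow> bool) \<Rightarrow> nat \<Rightarrow> (nat \<Rightarrow> nat \<Rightarrow> bool) \<Rightarrow> bool" where
  "Q_cospectral n E m F \<longleftrightarrow>
     mat_spectrum (signless_laplacian n E) = mat_spectrum (signless_laplacian m F)"

text \<open>Jellyfish graph JFG(p,q): cycle vertices 0..q-1 (i adjacent to (i+1) mod q);
  pendant vertices q + i*p + k (k < p) attached to cycle vertex i.
  Order q*(p+1).\<close>
definition jfg_order :: "nat \<Rightarrow> nat \<Rightarrow> nat" where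
  "jfg_order p q = q * (p + 1)"

definition jfg_adj :: "nat \<Rightarrow> nat \<Rightarrow> nat \<Rightarrow> nat \<Rightarrow> bool" where
  "jfg_adj p q u v \<longleftrightarrow>
     (u < q \<and> v < q \<and> (v = (u + 1) mod q \<or> u = (v + 1) mod q)) \<or>
     (u < q \<and> q \<le> v \<and> v < jfg_order p q \<and> (v - q) div p = u) \<or>
     (v < q \<and> q \<le> u \<and> u < jfg_order p q \<and> (u - q) div p = v)"

end

theory Submission
  imports Defs
begin


lemma det_proots:
  fixes A :: "complex mat"
  assumes A: "A \<in> carrier_mat n n"
  shows "det A = prod_mset (proots (char_poly A))"
proof -
  obtain as where cp: "char_poly A = (\<Prod> a \<leftarrow> as. [:- a, 1:])" and len: "length as = n"
    using char_poly_factorized[OF A] by blast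
  have pr: "proots (char_poly A) = mset as"
  proof -
    have "proots (char_poly A) = (\<Sum>p\<leftarrow>map (\<lambda>a. [:- a, 1:]) as. proots p)"
      unfolding cp by (subst proots_prod_list[symmetric]) (auto simp: o_def)
    also have "\<dots> = mset as" by (induction as) auto
    finally show ?thesis .
  qed
  have "poly (char_poly A) 0 = det (- (char_matrix A 0))"
    by (rule char_poly_matrix[OF A])
  also have "- (char_matrix A 0) = (-1) \<cdot>\<^sub>m A"
    using A by (intro eq_matI) (auto simp: char_matrix_def)
  also have "det ((-1) \<cdot>\<^sub>m A) = (-1)^n * det A"
    using det_smult[of "-1" A] A by simp
  finally have e1: "poly (char_poly A) 0 = (-1)^n * det A" .
  have e2: "poly (char_poly A) 0 = (\<Prod>a\<leftarrow>as. - a)"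
    unfolding cp by (induction as) auto
  have e3: "(\<Prod>a\<leftarrow>as. - a) = (-1)^length as * prod_list as"
    by (induction as) auto
  from e1 e2 e3 len have "(-1)^n * det A = (-1)^n * prod_list as" by simp
  hence "det A = prod_list as" by simp
  thus ?thesis unfolding pr by (simp add: prod_mset_prod_list)
qed

lemma det_real_spec:
  fixes M :: "real mat"
  assumes "M \<in> carrier_mat n n"
  shows "complex_of_real (det M) = prod_mset (mat_spectrum M)"
proof -
  have "complex_of_real (det M) = det (map_mat complex_of_real M)"
    by (simp add: of_real_hom.hom_det)
  also have "\<dots> = prod_mset (mat_spectrum M)"
    unfolding mat_spectrum_def by (rule det_proots[of _ n], insert assms, auto)
  finally show ?thesis .
qed


lemma sum_if_card: assumes "finite A" shows "(\<Sum>k\<in>A. if P k then 1 else 0 :: real) = real (card {k\<in>A. P k})"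
proof -
  have "(\<Sum>k\<in>A. if P k then 1 else 0 :: real) = (\<Sum>k\<in>{k\<in>A. P k}. 1)"
    by (rule sum.inter_filter[symmetric, OF assms])
  thus ?thesis by simp
qed

lemma Q_eq_NNt:
  fixes n :: nat and E and nb :: "nat \<Rightarrow> nat"
  assumes nb_lt: "\<And>u. u<n \<Longrightarrow> nb u < n" and nb_ne: "\<And>u. u<n \<Longrightarrow> nb u \<noteq> u"
    and nb2: "\<And>u. u<n \<Longrightarrow> nb (nb u) \<noteq> u"
    and adj: "\<And>u v. u<n \<Longrightarrow> v<n \<Longrightarrow> E u v \<longleftrightarrow> u \<noteq> v \<and> (nb u = v \<or> nb v = u)"
  shows "signless_laplacian n E =
     mat n n (\<lambda>(u,e). if u = e \<or> u = nb e then 1 else 0 :: real) *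
     (mat n n (\<lambda>(u,e). if u = e \<or> u = nb e then 1 else 0 :: real))\<^sup>T"
  (is "_ = ?N * ?N\<^sup>T")
proof (rule eq_matI)
  fix i j assume i: "i < dim_row (?N * ?N\<^sup>T)" and j: "j < dim_col (?N * ?N\<^sup>T)"
  hence i: "i < n" and j: "j < n" by auto
  have "(?N * ?N\<^sup>T) $$ (i,j) = row ?N i \<bullet> row ?N j"
    using i j by simp
  also have "\<dots> = (\<Sum>k\<in>{0..<n}. row ?N i $ k * row ?N j $ k)"
    unfolding scalar_prod_def by simp
  also have "\<dots> = (\<Sum>k\<in>{0..<n}. if (i = k \<or> i = nb k) \<and> (j = k \<or> j = nb k) then 1 else 0)"
    by (rule sum.cong[OF refl]) (use i j in simp)
  also have "\<dots> = real (card {k\<in>{0..<n}. (i = k \<or> i = nb k) \<and> (j = k \<or> j = nb k)})"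
    by (rule sum_if_card) simp
  finally have R: "(?N * ?N\<^sup>T) $$ (i,j) = real (card {k\<in>{0..<n}. (i = k \<or> i = nb k) \<and> (j = k \<or> j = nb k)})" .
  have L: "signless_laplacian n E $$ (i,j) = (if E i j then 1 else 0) + (if i = j then real (degree n E i) else 0)"
    using i j by (simp add: signless_laplacian_def adjacency_matrix_def degree_matrix_def)
  show "signless_laplacian n E $$ (i,j) = (?N * ?N\<^sup>T) $$ (i,j)"
  proof (cases "i = j")
    case True
    have s1: "{k\<in>{0..<n}. (i = k \<or> i = nb k) \<and> (j = k \<or> j = nb k)} = insert i {k\<in>{0..<n}. nb k = i}"
      using True i by auto
    have s2: "{k. k < n \<and> E i k} = insert (nb i) {k\<in>{0..<n}. nb k = i}"
    proof (rule Set.set_eqI)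
      fix x
      have "x \<in> {k. k < n \<and> E i k} \<longleftrightarrow> x < n \<and> i \<noteq> x \<and> (nb i = x \<or> nb x = i)"
        using adj[OF i, of x] by auto
      also have "\<dots> \<longleftrightarrow> x \<in> insert (nb i) {k\<in>{0..<n}. nb k = i}"
        using nb_lt[OF i] nb_ne[OF i] nb_ne[of x] by auto
      finally show "x \<in> {k. k < n \<and> E i k} \<longleftrightarrow> x \<in> insert (nb i) {k\<in>{0..<n}. nb k = i}" .
    qed
    have c1: "card (insert i {k\<in>{0..<n}. nb k = i}) = Suc (card {k\<in>{0..<n}. nb k = i})"
      using i nb_ne[OF i] by (intro card_insert_disjoint) auto
    have c2: "card (insert (nb i) {k\<in>{0..<n}. nb k = i}) = Suc (card {k\<in>{0..<n}. nb k = i})"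
      using i nb2[OF i] by (intro card_insert_disjoint) auto
    have "\<not> E i i" using adj[OF i i] by auto
    then show ?thesis using L R True s1 s2 c1 c2 by (simp add: degree_def)
  next
    case False
    show ?thesis
    proof (cases "nb i = j")
      case T1: True
      have "{k\<in>{0..<n}. (i = k \<or> i = nb k) \<and> (j = k \<or> j = nb k)} = {i}"
        using T1 False i j nb2[OF i] by auto
      moreover have "E i j" using adj[OF i j] T1 False by auto
      ultimately show ?thesis using L R False by simp
    next
      case F1: False
      show ?thesis
      proof (cases "nb j = i")
        case T2: True
        have "{k\<in>{0..<n}. (i = k \<or> i = nb k) \<and> (j = k \<or> j = nb k)} = {j}"
          using T2 False i j nb2[OF j] by auto
        moreover have "E i j" using adj[OF i j] T2 False by auto
        ultimately show ?thesis using L R False by simp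
      next
        case F2: False
        have "{k\<in>{0..<n}. (i = k \<or> i = nb k) \<and> (j = k \<or> j = nb k)} = {}"
          using F1 F2 False by auto
        moreover have "\<not> E i j" using adj[OF i j] F1 F2 by auto
        ultimately show ?thesis using L R False by simp
      qed
    qed
  qed
qed (auto simp: signless_laplacian_def adjacency_matrix_def degree_matrix_def)



lemma prod_list_diag_one:
  assumes "A \<in> carrier_mat k k" and "\<And>i. i < k \<Longrightarrow> A $$ (i,i) = 1"
  shows "prod_list (diag_mat A) = (1::real)"
proof -
  have "diag_mat A = map (\<lambda>i. 1) [0..<k]"
    using assms by (auto simp: diag_mat_def)
  moreover have "prod_list (map (\<lambda>i. 1::real) [0..<k]) = 1" by (induction k) auto
  ultimately show ?thesis by simp
qed

lemma det_cycle:
  fixes q :: nat assumes q: "q \<ge> 3"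
  shows "det (mat q q (\<lambda>(u,e). if u = e \<or> u = (e+1) mod q then 1 else 0 :: real)) = 1 + (-1)^(q-1)"
  (is "det ?C = _")
proof -
  have C: "?C \<in> carrier_mat q q" by simp
  have q0: "0 < q" using q by simp
  have "det ?C = (\<Sum>j<q. ?C $$ (0,j) * cofactor ?C 0 j)"
    by (rule laplace_expansion_row[OF C q0])
  also have "\<dots> = (\<Sum>j<q. (if j = 0 then cofactor ?C 0 0 else 0) + (if j = q - 1 then cofactor ?C 0 (q-1) else 0))"
  proof (rule sum.cong[OF refl])
    fix j assume "j \<in> {..<q}"
    hence j: "j < q" by simp
    have "(0 = (j+1) mod q) \<longleftrightarrow> j = q - 1"
      by (cases "j + 1 < q") (use j in auto)
    thus "?C $$ (0,j) * cofactor ?C 0 j = (if j = 0 then cofactor ?C 0 0 else 0) + (if j = q - 1 then cofactor ?C 0 (q-1) else 0)"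
      using j q0 q by auto
  qed
  also have "\<dots> = cofactor ?C 0 0 + cofactor ?C 0 (q-1)"
    using q0 by (simp add: sum.distrib)
  also have "cofactor ?C 0 0 = 1"
  proof -
    have D: "mat_delete ?C 0 0 \<in> carrier_mat (q-1) (q-1)" by (rule mat_delete_carrier[OF C])
    have "det (mat_delete ?C 0 0) = prod_list (diag_mat (mat_delete ?C 0 0))"
    proof (rule det_lower_triangular[OF _ D])
      fix i j assume ij: "i < j" and jq: "j < q - 1"
      have "Suc i \<noteq> (Suc j + 1) mod q"
      proof (cases "Suc j + 1 < q")
        case True thus ?thesis using ij by simp
      next
        case False hence "Suc j + 1 = q" using jq by simp
        thus ?thesis by simp
      qed
      thus "mat_delete ?C 0 0 $$ (i,j) = 0" using ij jq by (simp add: mat_delete_def)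
    qed
    also have "\<dots> = 1"
      by (rule prod_list_diag_one[OF D]) (simp add: mat_delete_def)
    finally show ?thesis by (simp add: cofactor_def)
  qed
  also have "cofactor ?C 0 (q-1) = (-1)^(q-1)"
  proof -
    have D: "mat_delete ?C 0 (q-1) \<in> carrier_mat (q-1) (q-1)" by (rule mat_delete_carrier[OF C])
    have ut: "upper_triangular (mat_delete ?C 0 (q-1))"
      unfolding upper_triangular_def
    proof (intro allI impI)
      fix i j assume i: "i < dim_row (mat_delete ?C 0 (q-1))" and ji: "j < i"
      hence iq: "i < q - 1" by simp
      have "(j + 1) mod q = j + 1" using ji iq by simp
      thus "mat_delete ?C 0 (q-1) $$ (i,j) = 0" using ji iq by (simp add: mat_delete_def)
    qed
    have "det (mat_delete ?C 0 (q-1)) = prod_list (diag_mat (mat_delete ?C 0 (q-1)))"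
      by (rule det_upper_triangular[OF ut D])
    also have "\<dots> = 1"
      by (rule prod_list_diag_one[OF D]) (simp add: mat_delete_def)
    finally show ?thesis by (simp add: cofactor_def)
  qed
  finally show ?thesis .
qed



definition nbj :: "nat \<Rightarrow> nat \<Rightarrow> nat \<Rightarrow> nat" where
  "nbj p q e = (if e < q then (e+1) mod q else (e-q) div p)"

lemma pend_lt:
  fixes p q e :: nat
  assumes "p \<ge> 1" "q \<le> e" "e < q * (p+1)"
  shows "(e - q) div p < q"
proof -
  have "e - q < q * p" using assms by (simp add: algebra_simps)
  thus ?thesis using assms by (simp add: div_less_iff_less_mult mult.commute)
qed

lemma nbj_lt_q:
  assumes "p \<ge> 1" "q \<ge> 3" "e < q * (p+1)"
  shows "nbj p q e < q"
  using assms pend_lt[of p q e] by (auto simp: nbj_def)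

lemma nbj_props:
  fixes p q :: nat
  assumes p: "p \<ge> 1" and q: "q \<ge> 3" and u: "u < q * (p+1)"
  shows "nbj p q u < q * (p+1)" "nbj p q u \<noteq> u" "nbj p q (nbj p q u) \<noteq> u"
proof -
  have l: "nbj p q u < q" by (rule nbj_lt_q[OF p q u])
  hence l2: "nbj p q u < q * (p+1)" by (simp add: algebra_simps)
  thus "nbj p q u < q * (p+1)" .
  show "nbj p q u \<noteq> u"
  proof (cases "u < q")
    case True
    show ?thesis
    proof (cases "u + 1 < q")
      case True thus ?thesis by (simp add: nbj_def)
    next
      case False hence "u + 1 = q" using \<open>u < q\<close> by simp
      thus ?thesis using q \<open>u < q\<close> by (simp add: nbj_def)
    qed
  next
    case False thus ?thesis using l by auto
  qed
  show "nbj p q (nbj p q u) \<noteq> u"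
  proof (cases "u < q")
    case True
    have "nbj p q (nbj p q u) = ((u + 1) mod q + 1) mod q" using True l by (simp add: nbj_def)
    also have "\<dots> = (u + 2) mod q" by (simp add: mod_simps)
    finally have e: "nbj p q (nbj p q u) = (u + 2) mod q" .
    show ?thesis
    proof (cases "u + 2 < q")
      case True thus ?thesis using e by simp
    next
      case False
      hence "u + 2 = q \<or> u + 2 = q + 1" using \<open>u < q\<close> by auto
      thus ?thesis
      proof
        assume h: "u + 2 = q"
        hence "(u + 2) mod q = 0" by simp
        thus ?thesis using e h q by auto
      next
        assume h: "u + 2 = q + 1"
        hence "(u + 2) mod q = (q + 1) mod q" by simp
        also have "\<dots> = 1 mod q" by (metis mod_add_self1 add.commute)
        also have "\<dots> = 1" using q by simp
        finally show ?thesis using e h q by auto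
      qed
    qed
  next
    case False
    have "nbj p q (nbj p q u) < q" by (rule nbj_lt_q[OF p q l2])
    thus ?thesis using False by auto
  qed
qed

lemma jfg_adj_nbj:
  fixes p q :: nat
  assumes p: "p \<ge> 1" and q: "q \<ge> 3" and u: "u < q * (p+1)" and v: "v < q * (p+1)"
  shows "jfg_adj p q u v \<longleftrightarrow> u \<noteq> v \<and> (nbj p q u = v \<or> nbj p q v = u)"
proof -
  have nu: "nbj p q u \<noteq> u" and nv: "nbj p q v \<noteq> v" using nbj_props p q u v by auto
  have lu: "nbj p q u < q" and lv: "nbj p q v < q" using nbj_lt_q p q u v by auto
  show ?thesis
  proof (cases "u < q")
    case uq: True
    show ?thesis
    proof (cases "v < q")
      case vq: True
      thus ?thesis using uq vq nu nv unfolding jfg_adj_def nbj_def by auto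
    next
      case vq: False
      thus ?thesis using uq vq lu v unfolding jfg_adj_def nbj_def jfg_order_def by auto
    qed
  next
    case uq: False
    show ?thesis
    proof (cases "v < q")
      case vq: True
      thus ?thesis using uq vq lv u unfolding jfg_adj_def nbj_def jfg_order_def by auto
    next
      case vq: False
      thus ?thesis using uq vq lu lv unfolding jfg_adj_def by auto
    qed
  qed
qed



lemma det_N:
  fixes p q :: nat assumes p: "p \<ge> 1" and q: "q \<ge> 3"
  shows "det (mat (q*(p+1)) (q*(p+1)) (\<lambda>(u,e). if u = e \<or> u = nbj p q e then 1 else 0 :: real))
     = 1 + (-1)^(q-1)"
proof -
  let ?C = "mat q q (\<lambda>(u,e). if u = e \<or> u = (e+1) mod q then 1 else 0 :: real)"
  let ?B = "mat q (q*p) (\<lambda>(u,k). if u = k div p then 1 else 0 :: real)"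
  have eq: "mat (q*(p+1)) (q*(p+1)) (\<lambda>(u,e). if u = e \<or> u = nbj p q e then 1 else 0 :: real)
     = four_block_mat ?C ?B (0\<^sub>m (q*p) q) (1\<^sub>m (q*p))"
  proof (rule eq_matI)
    fix i j assume i: "i < dim_row (four_block_mat ?C ?B (0\<^sub>m (q*p) q) (1\<^sub>m (q*p)))"
      and j: "j < dim_col (four_block_mat ?C ?B (0\<^sub>m (q*p) q) (1\<^sub>m (q*p)))"
    hence i': "i < q + q*p" and j': "j < q + q * p" by auto
    hence i'': "i < q*(p+1)" and j'': "j < q*(p+1)" by (auto simp: algebra_simps)
    have rhs: "four_block_mat ?C ?B (0\<^sub>m (q*p) q) (1\<^sub>m (q*p)) $$ (i,j) =
      (if i < q then if j < q then ?C $$ (i,j) else ?B $$ (i, j - q)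
       else if j < q then 0 else 1\<^sub>m (q*p) $$ (i - q, j - q))"
      using i' j' by simp
    have jl: "nbj p q j < q" by (rule nbj_lt_q[OF p q j''])
    show "mat (q*(p+1)) (q*(p+1)) (\<lambda>(u,e). if u = e \<or> u = nbj p q e then 1 else 0 :: real) $$ (i,j)
       = four_block_mat ?C ?B (0\<^sub>m (q*p) q) (1\<^sub>m (q*p)) $$ (i,j)"
    proof (cases "i < q")
      case iq: True
      show ?thesis
      proof (cases "j < q")
        case jq: True thus ?thesis using iq i'' j'' rhs by (simp add: nbj_def)
      next
        case jq: False
        have "j - q < q * p" using j' jq by simp
        thus ?thesis using iq jq i'' j'' rhs by (simp add: nbj_def)
      qed
    next
      case iq: False
      show ?thesis
      proof (cases "j < q")
        case jq: True thus ?thesis using iq i'' j'' rhs jl by auto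
      next
        case jq: False
        have "j - q < q * p" "i - q < q * p" using j' i' jq iq by auto
        thus ?thesis using iq jq i'' j'' rhs jl by auto
      qed
    qed
  qed (auto simp: algebra_simps)
  have "det (four_block_mat ?C ?B (0\<^sub>m (q*p) q) (1\<^sub>m (q*p))) = det ?C * det (1\<^sub>m (q*p) :: real mat)"
    by (rule det_four_block_mat_lower_left_zero) auto
  also have "\<dots> = 1 + (-1)^(q-1)" using det_cycle[OF q] by simp
  finally show ?thesis using eq by simp
qed

theorem lemma3p7:
  fixes p q m :: nat and F :: "nat \<Rightarrow> nat \<Rightarrow> bool"
  assumes "p \<ge> 1" and "q \<ge> 3"
    and "simple_graph m F"
    and "Q_cospectral m F (jfg_order p q) (jfg_adj p q)"
  shows "det (signless_laplacian m F) \<in> {0, 4}"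
proof -
  have p: "p \<ge> 1" and q: "q \<ge> 3" using assms by auto
  let ?n = "q*(p+1)"
  let ?N = "mat ?n ?n (\<lambda>(u,e). if u = e \<or> u = nbj p q e then 1 else 0 :: real)"
  have QJ: "signless_laplacian ?n (jfg_adj p q) = ?N * ?N\<^sup>T"
    by (rule Q_eq_NNt) (use nbj_props[OF p q] jfg_adj_nbj[OF p q] in auto)
  have "det (signless_laplacian ?n (jfg_adj p q)) = det ?N * det ?N\<^sup>T"
    unfolding QJ by (rule det_mult[of _ ?n]) auto
  also have "det ?N\<^sup>T = det ?N" by (rule det_transpose) auto
  also have "det ?N = 1 + (-1)^(q-1)" by (rule det_N[OF p q])
  finally have dJ: "det (signless_laplacian ?n (jfg_adj p q)) = (1 + (-1)^(q-1)) * (1 + (-1)^(q-1))" .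
  have cH: "signless_laplacian m F \<in> carrier_mat m m"
    by (auto simp: signless_laplacian_def adjacency_matrix_def degree_matrix_def)
  have cJ: "signless_laplacian ?n (jfg_adj p q) \<in> carrier_mat ?n ?n"
    by (auto simp: signless_laplacian_def adjacency_matrix_def degree_matrix_def)
  have "complex_of_real (det (signless_laplacian m F)) = prod_mset (mat_spectrum (signless_laplacian m F))"
    by (rule det_real_spec[OF cH])
  also have "\<dots> = prod_mset (mat_spectrum (signless_laplacian ?n (jfg_adj p q)))"
    using assms(4) by (simp add: Q_cospectral_def jfg_order_def)
  also have "\<dots> = complex_of_real (det (signless_laplacian ?n (jfg_adj p q)))"
    by (rule det_real_spec[OF cJ, symmetric])
  finally have "det (signless_laplacian m F) = det (signless_laplacian ?n (jfg_adj p q))" by simp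
  also have "\<dots> \<in> {0, 4}" unfolding dJ
    by (cases "even (q - 1)") auto
  finally show ?thesis .
qed


end
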